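(* Let $H=[H_X\,|\,H_Z]$ be the $(n-k)\times 2n$ binary check matrix of an $[[n,k,d]]$ stabilizer code. By row operations (Gaussian elimination) and a reordering of the qubits, $H$ can be written in the standard form \[ H=\left[\begin{array}{cc|cc} A & I_{s\times s} & D & 0\\ C & 0 & B & I_{s\times s}\\ E & 0 & F & 0\end{array}\right],\qquad 0\le s\le n-k , \] where $A,B,C,D,E,F$ are binary matrices of appropriate sizes. Then for every integer $c$ with $0\le c\le s$, the matrix obtained from $H$ by deleting the last $c$ columns of $H_X$ and the last $c$ columns of $H_Z$ is the check matrix of the simplified stabilizer group of an $[[n-c,k,d;c]]_{AB}$ EAQEC code; in particular this code can correct any Pauli error of weight at most $\lfloor\frac{d-1}{2}\rfloor$ acting on Alice's $n-c$ qubits together with Bob's $c$ qubits. Moreover, if the stabilizer code is nondegenerate, the elimination can be carried out so that the resulting $s$ satisfies \[ d-1\le s\le \left\lfloor \tfrac{n-k}{2}\right\rfloor . \]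
   Context: Pauli operators on $n$ qubits are considered up to phase, i.e. as tensor products $M_1\otimes\cdots\otimes M_n$ with $M_j\in\{I,X,Y,Z\}$; the weight of such an operator is the number of non-identity factors. An $[[n,k,d]]$ stabilizer code is defined by an abelian subgroup $\mathcal S$ of the $n$-qubit Pauli group not containing $-I$, with $n-k$ independent generators; $d$ is the minimum weight of an element of $\mathcal N(\mathcal S)\setminus\mathcal S$, where $\mathcal N(\mathcal S)$ is the normalizer of $\mathcal S$ in the Pauli group. The check matrix has one row per generator; a Pauli $X^{a}Z^{b}$ (with $a,b\in\{0,1\}^n$) corresponds to the row $[a\,|\,b]$. The code is nondegenerate if every non-identity element of $\mathcal N(\mathcal S)$ has weight at least $d$. An $[[n',k,d;c]]$ entanglement-assisted (EAQEC) code: Alice and Bob share $c$ Bell pairs $\frac{1}{\sqrt2}(|00\rangle+|11\rangle)$; Alice encodes $k$ qubits into $n'$ qubits (including her halves of the ebits) with a Clifford unitary. It is specified by a simplified stabilizer group $\mathcal S'$ on Alice's $n'$ qubits generated by operators $g'_1,h'_1,\dots,g'_c,h'_c,g'_{c+1},\dots,g'_{n'-k-c}$, where $g'_i,h'_i$ anticommute for $i\le c$ and all other pairs of generators commute; the encoded state on all $n'+c$ qubits is stabilized by $g'_i\otimes Z_i$, $h'_i\otimes X_i$ ($i\le c$, the $Z_i,X_i$ acting on Bob's $i$-th qubit) and $g'_j\otimes I$ ($j>c$). Its minimum distance is the minimum weight of an element of $\mathcal N(\mathcal S')\setminus\mathcal S_I$, where $\mathcal S_I=\langle g'_{c+1},\dots,g'_{n'-k-c}\rangle$.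 The subscript $AB$ indicates that the stabilizer group on all $n'+c$ qubits (Alice's and Bob's) is that of a standard $[[n'+c,k,d]]$ stabilizer code, so that errors on Bob's qubits are corrected as well as those on Alice's. *)

theory Defs
  imports Main
begin

text \<open>Pauli operators on n qubits up to phase: X^a Z^b encoded as the pair (a,b) of
 binary vectors; qubits are indexed 0..n-1, entries beyond n are required to be zero.\<close>

type_synonym pv = "(nat \<Rightarrow> bool) \<times> (nat \<Rightarrow> bool)"

definition pauli :: "nat \<Rightarrow> pv set" where
  "pauli n = {p. \<forall>j. n \<le> j \<longrightarrow> \<not> fst p j \<and> \<not> snd p j}"

definition pzero :: pv where
  "pzero = (\<lambda>_. False, \<lambda>_. False)"

text \<open>Product of Pauli operators (up to phase) = componentwise XOR.\<close>
definition padd :: "pv \<Rightarrow> pv \<Rightarrow> pv" where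
  "padd p q = (\<lambda>j. fst p j \<noteq> fst q j, \<lambda>j. snd p j \<noteq> snd q j)"

definition weight :: "nat \<Rightarrow> pv \<Rightarrow> nat" where
  "weight n p = card {j. j < n \<and> (fst p j \<or> snd p j)}"

text \<open>X^a Z^b and X^a' Z^b' commute iff a.b' + b.a' = 0 (mod 2).\<close>
definition commute :: "nat \<Rightarrow> pv \<Rightarrow> pv \<Rightarrow> bool" where
  "commute n p q = even (card {j. j < n \<and> ((fst p j \<and> snd q j) \<noteq> (snd p j \<and> fst q j))})"

definition psum :: "(nat \<Rightarrow> pv) \<Rightarrow> nat set \<Rightarrow> pv" where
  "psum r T = (\<lambda>j. odd (card {i\<in>T. fst (r i) j}), \<lambda>j. odd (card {i\<in>T. snd (r i) j}))"

definition rowspan :: "nat \<Rightarrow> (nat \<Rightarrow> pv) \<Rightarrow> pv set" where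
  "rowspan m r = {psum r T | T. T \<subseteq> {..<m}}"

definition indep :: "nat \<Rightarrow> (nat \<Rightarrow> pv) \<Rightarrow> bool" where
  "indep m r = (\<forall>T. T \<subseteq> {..<m} \<longrightarrow> T \<noteq> {} \<longrightarrow> psum r T \<noteq> pzero)"

definition normalizer :: "nat \<Rightarrow> pv set \<Rightarrow> pv set" where
  "normalizer n S = {p \<in> pauli n. \<forall>q\<in>S. commute n p q}"

definition stab_code :: "nat \<Rightarrow> nat \<Rightarrow> nat \<Rightarrow> (nat \<Rightarrow> pv) \<Rightarrow> bool" where
  "stab_code n k d r \<longleftrightarrow>
     k \<le> n \<and> (\<forall>i<n-k. r i \<in> pauli n) \<and> indep (n-k) r \<and>
     (\<forall>i<n-k. \<forall>j<n-k. commute n (r i) (r j)) \<and>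
     (\<exists>p \<in> normalizer n (rowspan (n-k) r) - rowspan (n-k) r. weight n p = d) \<and>
     (\<forall>p \<in> normalizer n (rowspan (n-k) r) - rowspan (n-k) r. d \<le> weight n p)"

definition nondegenerate :: "nat \<Rightarrow> nat \<Rightarrow> nat \<Rightarrow> (nat \<Rightarrow> pv) \<Rightarrow> bool" where
  "nondegenerate n k d r \<longleftrightarrow>
     (\<forall>p \<in> normalizer n (rowspan (n-k) r). p \<noteq> pzero \<longrightarrow> d \<le> weight n p)"

text \<open>Standard form with parameter s for an m-row check matrix on n qubits:
  rows 0..s-1 = [A I | D 0], rows s..2s-1 = [C 0 | B I], rows 2s..m-1 = [E 0 | F 0],
  the identity blocks occupying the last s columns (qubits n-s..n-1).\<close>
definition std_form :: "nat \<Rightarrow> nat \<Rightarrow> nat \<Rightarrow> (nat \<Rightarrow> pv) \<Rightarrow> bool" where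
  "std_form n m s r \<longleftrightarrow> 2*s \<le> m \<and> s \<le> n \<and>
     (\<forall>i<m. \<forall>j. n - s \<le> j \<and> j < n \<longrightarrow>
        (fst (r i) j \<longleftrightarrow> i < s \<and> j - (n - s) = i) \<and>
        (snd (r i) j \<longleftrightarrow> s \<le> i \<and> i < 2*s \<and> j - (n - s) = i - s))"

definition trunc :: "nat \<Rightarrow> pv \<Rightarrow> pv" where
  "trunc m p = (\<lambda>j. fst p j \<and> j < m, \<lambda>j. snd p j \<and> j < m)"

text \<open>Tensoring with X resp. Z on Bob's qubit, placed at position q.\<close>
definition with_X :: "nat \<Rightarrow> pv \<Rightarrow> pv" where
  "with_X q p = (\<lambda>j. fst p j \<or> j = q, snd p)"

definition with_Z :: "nat \<Rightarrow> pv \<Rightarrow> pv" where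
  "with_Z q p = (fst p, \<lambda>j. snd p j \<or> j = q)"

definition qperm :: "(nat \<Rightarrow> nat) \<Rightarrow> pv \<Rightarrow> pv" where
  "qperm \<sigma> p = (\<lambda>j. fst p (\<sigma> j), \<lambda>j. snd p (\<sigma> j))"

text \<open>R (rows 0..n'+c-k-1, on n' qubits) is the check matrix of the simplified stabilizer
 group of an [[n',k,d;c]]_AB EAQEC code. Generators g 0..g (n'-k-1), h 0..h (c-1)
 (0-based versions of g'_1.., h'_1..); Bob's i-th qubit is qubit n'+i of the n'+c-qubit system.\<close>
definition eaqec_AB :: "nat \<Rightarrow> nat \<Rightarrow> nat \<Rightarrow> nat \<Rightarrow> (nat \<Rightarrow> pv) \<Rightarrow> bool" where
  "eaqec_AB n' k d c R \<longleftrightarrow>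
    (\<exists>g h :: nat \<Rightarrow> pv.
      let m = n' + c - k;
          fam = (\<lambda>j. if j < c then h j else g (j - c));
          ext = (\<lambda>j. if j < c then with_X (n' + j) (h j)
                     else if j - c < c then with_Z (n' + (j - c)) (g (j - c))
                     else g (j - c));
          SI = rowspan (n' - k - c) (\<lambda>i. g (c + i))
      in k + c \<le> n' \<and>
         (\<forall>i<m. R i \<in> pauli n') \<and> indep m R \<and> rowspan m R = rowspan m fam \<and>
         (\<forall>i<n'-k. g i \<in> pauli n') \<and> (\<forall>i<c. h i \<in> pauli n') \<and>
         (\<forall>i<c. \<not> commute n' (g i) (h i)) \<and>
         (\<forall>i<n'-k. \<forall>j<n'-k. commute n' (g i) (g j)) \<and>
         (\<forall>i<c. \<forall>j<c. commute n' (h i) (h j)) \<and>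
         (\<forall>i<n'-k. \<forall>j<c. i \<noteq> j \<longrightarrow> commute n' (g i) (h j)) \<and>
         stab_code (n' + c) k d ext \<and>
         (\<forall>p \<in> normalizer n' (rowspan m fam) - SI. d \<le> weight n' p) \<and>
         (\<forall>e1 \<in> pauli (n' + c). \<forall>e2 \<in> pauli (n' + c).
            weight (n' + c) e1 \<le> (d - 1) div 2 \<longrightarrow> weight (n' + c) e2 \<le> (d - 1) div 2 \<longrightarrow>
            padd e1 e2 \<in> rowspan m ext \<or> padd e1 e2 \<notin> normalizer (n' + c) (rowspan m ext)))"

end

theory Submission
  imports Defs
begin

lemma odd_card_xor:
  assumes "finite A"
  shows "odd (card {x\<in>A. P x \<noteq> Q x}) = (odd (card {x\<in>A. P x}) \<noteq> odd (card {x\<in>A. Q x}))"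
  using assms
proof (induction A rule: finite_induct)
  case empty then show ?case by simp
next
  case (insert a A)
  have e: "\<And>R. card {x\<in>insert a A. R x} = (if R a then Suc (card {x\<in>A. R x}) else card {x\<in>A. R x})"
  proof -
    fix R
    have "{x\<in>insert a A. R x} = (if R a then insert a {x\<in>A. R x} else {x\<in>A. R x})" by auto
    then show "card {x\<in>insert a A. R x} = (if R a then Suc (card {x\<in>A. R x}) else card {x\<in>A. R x})"
      using insert by simp
  qed
  show ?case unfolding e using insert.IH by auto
qed


definition sdiff :: "nat set \<Rightarrow> nat set \<Rightarrow> nat set" where
  "sdiff A B = (A - B) \<union> (B - A)"

lemma card_sdiff_parity:
  assumes "finite A" "finite B"
  shows "odd (card {i\<in>sdiff A B. F i}) = (odd (card {i\<in>A. F i}) \<noteq> odd (card {i\<in>B. F i}))"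
proof -
  have "odd (card {i\<in>A\<union>B. (i\<in>A \<and> F i) \<noteq> (i\<in>B \<and> F i)}) =
        (odd (card {i\<in>A\<union>B. i\<in>A \<and> F i}) \<noteq> odd (card {i\<in>A\<union>B. i\<in>B \<and> F i}))"
    using assms by (intro odd_card_xor) auto
  moreover have "{i\<in>A\<union>B. (i\<in>A \<and> F i) \<noteq> (i\<in>B \<and> F i)} = {i\<in>sdiff A B. F i}"
    unfolding sdiff_def by auto
  moreover have "{i\<in>A\<union>B. i\<in>A \<and> F i} = {i\<in>A. F i}" by auto
  moreover have "{i\<in>A\<union>B. i\<in>B \<and> F i} = {i\<in>B. F i}" by auto
  ultimately show ?thesis by simp
qed

lemma psum_sdiff:
  assumes "finite A" "finite B"
  shows "psum r (sdiff A B) = padd (psum r A) (psum r B)"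
  unfolding psum_def padd_def using card_sdiff_parity[OF assms] by auto

lemma psum_empty[simp]: "psum r {} = pzero"
  unfolding psum_def pzero_def by simp

lemma psum_single[simp]: "psum r {i} = r i"
proof -
  have a: "\<And>P. card {i'\<in>{i}. P i'} = (if P i then 1 else 0)"
  proof -
    fix P
    have "{i'\<in>{i}. P i'} = (if P i then {i} else {})" by auto
    then show "card {i'\<in>{i}. P i'} = (if P i then 1 else 0)" by simp
  qed
  show ?thesis unfolding psum_def a by (simp add: prod_eq_iff)
qed

lemma padd_zero[simp]: "padd p pzero = p" "padd pzero p = p"
  unfolding padd_def pzero_def by (simp_all add: prod_eq_iff)

lemma padd_self[simp]: "padd p p = pzero"
  unfolding padd_def pzero_def by (simp add: prod_eq_iff)

lemma padd_comm: "padd p q = padd q p"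
  unfolding padd_def by (auto simp add: prod_eq_iff)

lemma padd_assoc: "padd (padd p q) u = padd p (padd q u)"
  unfolding padd_def by (auto simp add: prod_eq_iff)

lemma padd_cancel: "padd (padd p q) q = p"
  by (simp add: padd_assoc)

lemma psum_in: "T \<subseteq> {..<m} \<Longrightarrow> psum r T \<in> rowspan m r"
  unfolding rowspan_def by blast

lemma pzero_in_rowspan: "pzero \<in> rowspan m r"
  using psum_in[of "{}" m r] by simp

lemma gen_in_rowspan: "i < m \<Longrightarrow> r i \<in> rowspan m r"
  using psum_in[of "{i}" m r] by simp

lemma rowspan_padd:
  assumes "p \<in> rowspan m r" "q \<in> rowspan m r"
  shows "padd p q \<in> rowspan m r"
proof -
  obtain A where A: "A \<subseteq> {..<m}" "p = psum r A" using assms(1) unfolding rowspan_def by blast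
  obtain B where B: "B \<subseteq> {..<m}" "q = psum r B" using assms(2) unfolding rowspan_def by blast
  have fin: "finite A" "finite B" using A B finite_subset by auto
  have "padd p q = psum r (sdiff A B)" using psum_sdiff[OF fin] A B by simp
  moreover have "sdiff A B \<subseteq> {..<m}" using A B unfolding sdiff_def by auto
  ultimately show ?thesis using psum_in by simp
qed

lemma psum_insert:
  assumes "finite T" "i \<notin> T"
  shows "psum r (insert i T) = padd (psum r T) (r i)"
proof -
  have "sdiff T {i} = insert i T" using assms unfolding sdiff_def by auto
  then show ?thesis using psum_sdiff[of T "{i}" r] assms by simp
qed

lemma psum_in_closed:
  assumes "finite T" "\<forall>i\<in>T. r i \<in> W" "pzero \<in> W" "\<forall>p\<in>W. \<forall>q\<in>W. padd p q \<in> W"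
  shows "psum r T \<in> W"
  using assms
proof (induction T rule: finite_induct)
  case empty then show ?case by simp
next
  case (insert i T) then show ?case by (simp add: psum_insert)
qed

lemma rowspan_sub:
  assumes "\<forall>i<m. r i \<in> W" "pzero \<in> W" "\<forall>p\<in>W. \<forall>q\<in>W. padd p q \<in> W"
  shows "rowspan m r \<subseteq> W"
proof
  fix p assume "p \<in> rowspan m r"
  then obtain T where T: "T \<subseteq> {..<m}" "p = psum r T" unfolding rowspan_def by blast
  then have "finite T" using finite_subset by auto
  then show "p \<in> W" using T assms by (intro psum_in_closed[of T r W, simplified T(2)[symmetric]]) auto
qed

lemma psum_cong:
  assumes "\<And>i. i \<in> T \<Longrightarrow> r i = r' i" shows "psum r T = psum r' T"
proof -
  have "\<And>j. {i\<in>T. fst (r i) j} = {i\<in>T. fst (r' i) j}" "\<And>j. {i\<in>T. snd (r i) j} = {i\<in>T. snd (r' i) j}"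
    using assms by auto
  then show ?thesis unfolding psum_def by simp
qed

lemma rowspan_cong: "(\<And>i. i < m \<Longrightarrow> r i = r' i) \<Longrightarrow> rowspan m r = rowspan m r'"
  unfolding rowspan_def
  by (smt (verit, ccfv_SIG) Collect_cong lessThan_iff psum_cong subset_iff)

lemma indep_cong: "(\<And>i. i < m \<Longrightarrow> r i = r' i) \<Longrightarrow> indep m r = indep m r'"
  unfolding indep_def
  by (smt (verit, ccfv_SIG) lessThan_iff psum_cong subset_iff)

lemma psum_reindex:
  assumes "inj_on f T"
  shows "psum (\<lambda>i. r (f i)) T = psum r (f ` T)"
proof -
  have c: "\<And>P. card {i\<in>f ` T. P i} = card {i\<in>T. P (f i)}"
  proof -
    fix P
    have "f ` {i\<in>T. P (f i)} = {i\<in>f ` T. P i}" by auto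
    moreover have "inj_on f {i\<in>T. P (f i)}" using assms by (rule inj_on_subset) auto
    ultimately show "card {i\<in>f ` T. P i} = card {i\<in>T. P (f i)}" using card_image by metis
  qed
  show ?thesis unfolding psum_def c by simp
qed

lemma rowspan_perm:
  assumes "bij_betw \<pi> {..<m} {..<m}"
  shows "rowspan m (\<lambda>i. r (\<pi> i)) = rowspan m r"
proof
  show "rowspan m (\<lambda>i. r (\<pi> i)) \<subseteq> rowspan m r"
  proof
    fix p assume "p \<in> rowspan m (\<lambda>i. r (\<pi> i))"
    then obtain T where T: "T \<subseteq> {..<m}" "p = psum (\<lambda>i. r (\<pi> i)) T" unfolding rowspan_def by blast
    have "inj_on \<pi> T" using assms T(1) bij_betw_imp_inj_on inj_on_subset by blast
    then have "p = psum r (\<pi> ` T)" using T psum_reindex by simp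
    moreover have "\<pi> ` T \<subseteq> {..<m}" using assms T(1) bij_betw_imp_surj_on by blast
    ultimately show "p \<in> rowspan m r" using psum_in by simp
  qed
next
  show "rowspan m r \<subseteq> rowspan m (\<lambda>i. r (\<pi> i))"
  proof
    fix p assume "p \<in> rowspan m r"
    then obtain T where T: "T \<subseteq> {..<m}" "p = psum r T" unfolding rowspan_def by blast
    define T' where "T' = {i\<in>{..<m}. \<pi> i \<in> T}"
    have "\<pi> ` T' = T" using assms T(1) unfolding T'_def bij_betw_def by auto
    moreover have "inj_on \<pi> T'" using assms unfolding T'_def bij_betw_def by (auto intro: inj_on_subset)
    ultimately have "p = psum (\<lambda>i. r (\<pi> i)) T'" using T psum_reindex by metis
    moreover have "T' \<subseteq> {..<m}" unfolding T'_def by auto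
    ultimately show "p \<in> rowspan m (\<lambda>i. r (\<pi> i))" using psum_in by simp
  qed
qed

lemma indep_perm:
  assumes "bij_betw \<pi> {..<m} {..<m}" "indep m r"
  shows "indep m (\<lambda>i. r (\<pi> i))"
  unfolding indep_def
proof (intro allI impI)
  fix T assume T: "T \<subseteq> {..<m}" "T \<noteq> {}"
  have "inj_on \<pi> T" using assms T(1) bij_betw_imp_inj_on inj_on_subset by blast
  then have "psum (\<lambda>i. r (\<pi> i)) T = psum r (\<pi> ` T)" using psum_reindex by simp
  moreover have "\<pi> ` T \<subseteq> {..<m}" using assms T(1) bij_betw_imp_surj_on by blast
  ultimately show "psum (\<lambda>i. r (\<pi> i)) T \<noteq> pzero" using assms(2) T(2) unfolding indep_def by auto
qed

definition sympl :: "nat set \<Rightarrow> pv \<Rightarrow> pv \<Rightarrow> bool" where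
  "sympl A p q = odd (card {j\<in>A. (fst p j \<and> snd q j) \<noteq> (snd p j \<and> fst q j)})"

lemma commute_sympl: "commute n p q = (\<not> sympl {..<n} p q)"
  unfolding commute_def sympl_def by (simp add: lessThan_def)

lemma sympl_padd_right:
  assumes "finite A"
  shows "sympl A p (padd q q') = (sympl A p q \<noteq> sympl A p q')"
proof -
  have e: "{j\<in>A. (fst p j \<and> snd (padd q q') j) \<noteq> (snd p j \<and> fst (padd q q') j)} =
        {j\<in>A. ((fst p j \<and> snd q j) \<noteq> (snd p j \<and> fst q j)) \<noteq> ((fst p j \<and> snd q' j) \<noteq> (snd p j \<and> fst q' j))}"
    unfolding padd_def by auto
  show ?thesis unfolding sympl_def
    by (simp only: e odd_card_xor[OF assms, of "\<lambda>j. (fst p j \<and> snd q j) \<noteq> (snd p j \<and> fst q j)" "\<lambda>j. (fst p j \<and> snd q' j) \<noteq> (snd p j \<and> fst q' j)"])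
qed

lemma sympl_sym: "sympl A p q = sympl A q p"
proof -
  have "{j\<in>A. (fst p j \<and> snd q j) \<noteq> (snd p j \<and> fst q j)} = {j\<in>A. (fst q j \<and> snd p j) \<noteq> (snd q j \<and> fst p j)}"
    by auto
  then show ?thesis unfolding sympl_def by simp
qed

lemma sympl_padd_left:
  assumes "finite A"
  shows "sympl A (padd q q') p = (sympl A q p \<noteq> sympl A q' p)"
  using sympl_padd_right[OF assms] sympl_sym by metis

lemma sympl_zero:
  assumes "\<forall>j\<in>A. \<not> fst p j \<and> \<not> snd p j"
  shows "\<not> sympl A p q"
proof -
  have e: "{j\<in>A. (fst p j \<and> snd q j) \<noteq> (snd p j \<and> fst q j)} = {}" using assms by auto
  show ?thesis unfolding sympl_def by (simp only: e) simp
qed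

lemma sympl_cong:
  assumes "\<forall>j\<in>A. fst p j = fst p' j \<and> snd p j = snd p' j \<and> fst q j = fst q' j \<and> snd q j = snd q' j"
  shows "sympl A p q = sympl A p' q'"
proof -
  have "{j\<in>A. (fst p j \<and> snd q j) \<noteq> (snd p j \<and> fst q j)} = {j\<in>A. (fst p' j \<and> snd q' j) \<noteq> (snd p' j \<and> fst q' j)}"
    using assms by auto
  then show ?thesis unfolding sympl_def by simp
qed

lemma sympl_Un:
  assumes "finite A" "finite B" "A \<inter> B = {}"
  shows "sympl (A \<union> B) p q = (sympl A p q \<noteq> sympl B p q)"
proof -
  let ?P = "\<lambda>j. (fst p j \<and> snd q j) \<noteq> (snd p j \<and> fst q j)"
  have "{j\<in>A\<union>B. ?P j} = {j\<in>A. ?P j} \<union> {j\<in>B. ?P j}" by auto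
  moreover have "card ({j\<in>A. ?P j} \<union> {j\<in>B. ?P j}) = card {j\<in>A. ?P j} + card {j\<in>B. ?P j}"
    using assms by (intro card_Un_disjoint) auto
  ultimately show ?thesis unfolding sympl_def by simp
qed

lemma sympl_rowspan:
  assumes "finite A" "\<forall>i<m. \<not> sympl A p (r i)" "q \<in> rowspan m r"
  shows "\<not> sympl A p q"
proof -
  have "rowspan m r \<subseteq> {q. \<not> sympl A p q}"
  proof (rule rowspan_sub)
    show "\<forall>i<m. r i \<in> {q. \<not> sympl A p q}" using assms by simp
    show "pzero \<in> {q. \<not> sympl A p q}" using sympl_zero[of A pzero p] sympl_sym unfolding pzero_def by auto
    show "\<forall>x\<in>{q. \<not> sympl A p q}. \<forall>y\<in>{q. \<not> sympl A p q}. padd x y \<in> {q. \<not> sympl A p q}"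
      using sympl_padd_right[OF assms(1)] by simp
  qed
  then show ?thesis using assms(3) by auto
qed

lemma normalizer_gen:
  "normalizer n (rowspan m r) = {p \<in> pauli n. \<forall>i<m. commute n p (r i)}"
  unfolding normalizer_def commute_sympl using sympl_rowspan[of "{..<n}"] gen_in_rowspan by blast


lemma pauli_padd: "p \<in> pauli n \<Longrightarrow> q \<in> pauli n \<Longrightarrow> padd p q \<in> pauli n"
  unfolding pauli_def padd_def by auto

lemma pzero_pauli: "pzero \<in> pauli n"
  unfolding pauli_def pzero_def by auto

lemma rowspan_pauli: "\<forall>i<m. r i \<in> pauli n \<Longrightarrow> rowspan m r \<subseteq> pauli n"
  by (rule rowspan_sub) (auto simp: pauli_padd pzero_pauli)

lemma psum_trunc: "psum (\<lambda>i. trunc a (r i)) T = trunc a (psum r T)"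
proof -
  have "\<And>j. {i\<in>T. fst (r i) j \<and> j < a} = (if j < a then {i\<in>T. fst (r i) j} else {})"
       "\<And>j. {i\<in>T. snd (r i) j \<and> j < a} = (if j < a then {i\<in>T. snd (r i) j} else {})" by auto
  then show ?thesis unfolding psum_def trunc_def by (auto simp: prod_eq_iff)
qed

lemma trunc_pauli: "trunc a p \<in> pauli a"
  unfolding trunc_def pauli_def by auto

lemma trunc_id: "p \<in> pauli a \<Longrightarrow> trunc a p = p"
  unfolding trunc_def pauli_def by (auto simp: prod_eq_iff fun_eq_iff) (meson not_le)+

lemma pauli_mono: "p \<in> pauli a \<Longrightarrow> a \<le> b \<Longrightarrow> p \<in> pauli b"
  unfolding pauli_def by auto

lemma weight_padd: "weight n (padd p q) \<le> weight n p + weight n q"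
proof -
  have "{j. j < n \<and> (fst (padd p q) j \<or> snd (padd p q) j)} \<subseteq>
        {j. j < n \<and> (fst p j \<or> snd p j)} \<union> {j. j < n \<and> (fst q j \<or> snd q j)}"
    unfolding padd_def by auto
  then have "weight n (padd p q) \<le> card ({j. j < n \<and> (fst p j \<or> snd p j)} \<union> {j. j < n \<and> (fst q j \<or> snd q j)})"
    unfolding weight_def by (intro card_mono) auto
  also have "\<dots> \<le> weight n p + weight n q" unfolding weight_def by (rule card_Un_le)
  finally show ?thesis .
qed

lemma weight_zero: "p \<in> pauli n \<Longrightarrow> weight n p = 0 \<Longrightarrow> p = pzero"
  unfolding weight_def pauli_def pzero_def
  by (auto simp: prod_eq_iff fun_eq_iff) (metis not_le)+

lemma weight_le: "weight n p \<le> n"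
proof -
  have "weight n p \<le> card {..<n}" unfolding weight_def by (intro card_mono) auto
  then show ?thesis by simp
qed

lemma stab_code_d_pos: "stab_code n k d r \<Longrightarrow> 1 \<le> d"
proof (rule ccontr)
  assume sc: "stab_code n k d r" and "\<not> 1 \<le> d"
  then have d0: "d = 0" by simp
  from sc obtain p where p: "p \<in> normalizer n (rowspan (n-k) r)" "p \<notin> rowspan (n-k) r" "weight n p = d"
    unfolding stab_code_def by blast
  then have "p \<in> pauli n" unfolding normalizer_def by auto
  then have "p = pzero" using weight_zero p d0 by simp
  then show False using p pzero_in_rowspan by simp
qed

lemma stab_code_transfer:
  assumes sc: "stab_code n k d r" and bij: "bij_betw \<pi> {..<n-k} {..<n-k}"
    and eq: "\<And>i. i < n - k \<Longrightarrow> r' i = r (\<pi> i)"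
  shows "stab_code n k d r'" "rowspan (n-k) r' = rowspan (n-k) r"
proof -
  have rs: "rowspan (n-k) r' = rowspan (n-k) r"
    using rowspan_cong[of "n-k" r' "\<lambda>i. r (\<pi> i)"] eq rowspan_perm[OF bij] by simp
  then show "rowspan (n-k) r' = rowspan (n-k) r" .
  have pi: "\<And>i. i < n-k \<Longrightarrow> \<pi> i < n-k" using bij bij_betwE by blast
  have "indep (n-k) r'" using indep_cong[of "n-k" r' "\<lambda>i. r (\<pi> i)"] eq indep_perm[OF bij] sc
    unfolding stab_code_def by simp
  then show "stab_code n k d r'" using sc rs pi eq unfolding stab_code_def by simp
qed


locale P1 =
  fixes n k d :: nat and r :: "nat \<Rightarrow> pv" and s c :: nat
  assumes sc: "stab_code n k d r" and sf: "std_form n (n-k) s r" and cs: "c \<le> s"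
begin

lemma kn: "k \<le> n" using sc unfolding stab_code_def by simp
lemma rp: "i < n-k \<Longrightarrow> r i \<in> pauli n" using sc unfolding stab_code_def by simp
lemma ind: "indep (n-k) r" using sc unfolding stab_code_def by simp
lemma comm: "i < n-k \<Longrightarrow> j < n-k \<Longrightarrow> commute n (r i) (r j)" using sc unfolding stab_code_def by simp
lemma s2: "2*s \<le> n-k" using sf unfolding std_form_def by simp
lemma sn: "s \<le> n" using sf unfolding std_form_def by simp
lemma std: "i < n-k \<Longrightarrow> n-s \<le> j \<Longrightarrow> j < n \<Longrightarrow>
   (fst (r i) j \<longleftrightarrow> i < s \<and> j - (n - s) = i) \<and> (snd (r i) j \<longleftrightarrow> s \<le> i \<and> i < 2*s \<and> j - (n - s) = i - s)"
  using sf unfolding std_form_def by blast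

lemma std_bob_fst: assumes "i < n-k"
  shows "fst (r i) x = ((fst (r i) x \<and> x < n-c) \<or> (n-c \<le> x \<and> x < n \<and> i = s-c+(x-(n-c))))"
proof (cases "x < n-c")
  case True then show ?thesis by simp
next
  case False
  show ?thesis
  proof (cases "x < n")
    case True
    have "n - s \<le> x" using False cs by simp
    then have "fst (r i) x \<longleftrightarrow> i < s \<and> x - (n - s) = i" using std[OF assms _ True] by blast
    moreover have "(i < s \<and> x - (n - s) = i) \<longleftrightarrow> i = s-c+(x-(n-c))" using False True cs sn by arith
    ultimately show ?thesis using False True by simp
  next
    case False2: False
    then show ?thesis using rp[OF assms] unfolding pauli_def by auto
  qed
qed

lemma std_bob_snd: assumes "i < n-k"
  shows "snd (r i) x = ((snd (r i) x \<and> x < n-c) \<or> (n-c \<le> x \<and> x < n \<and> i = 2*s-c+(x-(n-c))))"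
proof (cases "x < n-c")
  case True then show ?thesis by simp
next
  case False
  show ?thesis
  proof (cases "x < n")
    case True
    have "n - s \<le> x" using False cs by simp
    then have "snd (r i) x \<longleftrightarrow> s \<le> i \<and> i < 2*s \<and> x - (n - s) = i - s" using std[OF assms _ True] by blast
    moreover have "(s \<le> i \<and> i < 2*s \<and> x - (n - s) = i - s) \<longleftrightarrow> i = 2*s-c+(x-(n-c))" using False True cs sn by arith
    ultimately show ?thesis using False True by simp
  next
    case False2: False
    then show ?thesis using rp[OF assms] unfolding pauli_def by auto
  qed
qed

definition pi :: "nat \<Rightarrow> nat" where
  "pi j = (if j < c then s-c+j else if j < 2*c then 2*s-2*c+j else if j < s+c then j - 2*c
           else if j < 2*s then j - c else j)"

lemma pi_bij: "bij_betw pi {..<n-k} {..<n-k}"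
proof -
  have sub: "pi ` {..<n-k} \<subseteq> {..<n-k}" using s2 cs unfolding pi_def by auto
  have inj: "inj_on pi {..<n-k}"
    unfolding inj_on_def pi_def using cs by (auto split: if_splits)
  show ?thesis unfolding bij_betw_def using endo_inj_surj[OF _ sub inj] inj by simp
qed

lemma pi_lt: "j < n-k \<Longrightarrow> pi j < n-k" using pi_bij bij_betwE by blast

definition nobob :: "nat \<Rightarrow> bool" where
  "nobob i \<longleftrightarrow> \<not> (s-c \<le> i \<and> i < s) \<and> \<not> (2*s-c \<le> i \<and> i < 2*s)"

lemma pi_nobob: "2*c \<le> j \<Longrightarrow> nobob (pi j)"
  unfolding nobob_def pi_def using cs by auto

lemma nobob_pi: "i < n-k \<Longrightarrow> nobob i \<Longrightarrow> \<exists>j. 2*c \<le> j \<and> j < n-k \<and> pi j = i"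
proof -
  assume i: "i < n-k" "nobob i"
  have "i \<in> pi ` {..<n-k}" using pi_bij i unfolding bij_betw_def by auto
  then obtain j where j: "j < n-k" "pi j = i" by auto
  have "2*c \<le> j"
  proof (rule ccontr)
    assume "\<not> 2*c \<le> j"
    then have "\<not> nobob (pi j)" unfolding nobob_def pi_def using cs by auto
    then show False using i j by simp
  qed
  then show ?thesis using j by blast
qed

lemma trunc_nobob: "i < n-k \<Longrightarrow> nobob i \<Longrightarrow> trunc (n-c) (r i) = r i"
proof -
  assume i: "i < n-k" "nobob i"
  have a: "\<And>x. fst (r i) x = (fst (r i) x \<and> x < n-c)"
  proof -
    fix x
    have "\<not> (n-c \<le> x \<and> x < n \<and> i = s-c+(x-(n-c)))" using i(2) cs unfolding nobob_def by auto
    then show "fst (r i) x = (fst (r i) x \<and> x < n-c)" using std_bob_fst[OF i(1), of x] by blast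
  qed
  have b: "\<And>x. snd (r i) x = (snd (r i) x \<and> x < n-c)"
  proof -
    fix x
    have "\<not> (n-c \<le> x \<and> x < n \<and> i = 2*s-c+(x-(n-c)))" using i(2) cs unfolding nobob_def by auto
    then show "snd (r i) x = (snd (r i) x \<and> x < n-c)" using std_bob_snd[OF i(1), of x] by blast
  qed
  show ?thesis unfolding trunc_def using a b by (simp add: prod_eq_iff fun_eq_iff)
qed

end

lemma card_eq_single: "card {i\<in>T. i = a} = (if a \<in> T then 1 else 0)"
proof -
  have "{i\<in>T. i = a} = (if a \<in> T then {a} else {})" by auto
  then show ?thesis by simp
qed

context P1 begin

lemma cn: "c \<le> n" using cs sn by simp

lemma bob_fst: "i < n-k \<Longrightarrow> b < c \<Longrightarrow> fst (r i) (n-c+b) = (i = s-c+b)"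
proof -
  assume a: "i < n-k" "b < c"
  have "n-c+b < n" "\<not> n-c+b < n-c" "n-c+b-(n-c) = b" using a cn by auto
  then show ?thesis using std_bob_fst[OF a(1), of "n-c+b"] by simp
qed

lemma bob_snd: "i < n-k \<Longrightarrow> b < c \<Longrightarrow> snd (r i) (n-c+b) = (i = 2*s-c+b)"
proof -
  assume a: "i < n-k" "b < c"
  have "n-c+b < n" "\<not> n-c+b < n-c" "n-c+b-(n-c) = b" using a cn by auto
  then show ?thesis using std_bob_snd[OF a(1), of "n-c+b"] by simp
qed

lemma psum_bob:
  assumes T: "T \<subseteq> {..<n-k}" and b: "b < c"
  shows "fst (psum r T) (n-c+b) = (s-c+b \<in> T)" "snd (psum r T) (n-c+b) = (2*s-c+b \<in> T)"
proof -
  have e: "{i\<in>T. fst (r i) (n-c+b)} = {i\<in>T. i = s-c+b}"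
    using bob_fst T b by auto
  show "fst (psum r T) (n-c+b) = (s-c+b \<in> T)" unfolding psum_def by (simp only: fst_conv e card_eq_single) simp
  have e: "{i\<in>T. snd (r i) (n-c+b)} = {i\<in>T. i = 2*s-c+b}"
    using bob_snd T b by auto
  show "snd (psum r T) (n-c+b) = (2*s-c+b \<in> T)" unfolding psum_def by (simp only: snd_conv e card_eq_single) simp
qed


lemma bob_fst': "i < n-k \<Longrightarrow> x \<in> {n-c..<n} \<Longrightarrow> fst (r i) x = (i = s-c+(x-(n-c)))"
proof -
  assume a: "i < n-k" "x \<in> {n-c..<n}"
  then have x: "x = n-c+(x-(n-c))" "x-(n-c) < c" by auto
  show ?thesis using bob_fst[OF a(1) x(2)] x(1) by metis
qed

lemma bob_snd': "i < n-k \<Longrightarrow> x \<in> {n-c..<n} \<Longrightarrow> snd (r i) x = (i = 2*s-c+(x-(n-c)))"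
proof -
  assume a: "i < n-k" "x \<in> {n-c..<n}"
  then have x: "x = n-c+(x-(n-c))" "x-(n-c) < c" by auto
  show ?thesis using bob_snd[OF a(1) x(2)] x(1) by metis
qed

lemma sympl_bob:
  assumes i: "i < n-k"
  shows "sympl {n-c..<n} p (r i) = ((s-c \<le> i \<and> i < s \<and> snd p (n-c+(i-(s-c)))) \<or>
                                     (2*s-c \<le> i \<and> i < 2*s \<and> fst p (n-c+(i-(2*s-c)))))"
proof -
  let ?S = "{j\<in>{n-c..<n}. (fst p j \<and> snd (r i) j) \<noteq> (snd p j \<and> fst (r i) j)}"
  have c1: "card ?S = (if snd p (n-c+(i-(s-c))) then 1 else 0)" if h: "s-c \<le> i" "i < s"
  proof -
    have "?S = (if snd p (n-c+(i-(s-c))) then {n-c+(i-(s-c))} else {})"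
    proof -
      have "\<And>x. x \<in> {n-c..<n} \<Longrightarrow> \<not> snd (r i) x" using bob_snd'[OF i] h cs by auto
      moreover have "\<And>x. x \<in> {n-c..<n} \<Longrightarrow> fst (r i) x = (x = n-c+(i-(s-c)))" using bob_fst'[OF i] h cs by auto
      moreover have "n-c+(i-(s-c)) \<in> {n-c..<n}" using h cs cn by auto
      ultimately show ?thesis by auto
    qed
    then show ?thesis by simp
  qed
  have c2: "card ?S = (if fst p (n-c+(i-(2*s-c))) then 1 else 0)" if h: "2*s-c \<le> i" "i < 2*s"
  proof -
    have "?S = (if fst p (n-c+(i-(2*s-c))) then {n-c+(i-(2*s-c))} else {})"
    proof -
      have "\<And>x. x \<in> {n-c..<n} \<Longrightarrow> \<not> fst (r i) x" using bob_fst'[OF i] h cs by auto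
      moreover have "\<And>x. x \<in> {n-c..<n} \<Longrightarrow> snd (r i) x = (x = n-c+(i-(2*s-c)))" using bob_snd'[OF i] h cs by auto
      moreover have "n-c+(i-(2*s-c)) \<in> {n-c..<n}" using h cs cn by auto
      ultimately show ?thesis by auto
    qed
    then show ?thesis by simp
  qed
  have c3: "card ?S = 0" if h: "\<not> (s-c \<le> i \<and> i < s)" "\<not> (2*s-c \<le> i \<and> i < 2*s)"
  proof -
    have "\<And>x. x \<in> {n-c..<n} \<Longrightarrow> \<not> fst (r i) x" using bob_fst'[OF i] h cs by auto
    moreover have "\<And>x. x \<in> {n-c..<n} \<Longrightarrow> \<not> snd (r i) x" using bob_snd'[OF i] h cs by auto
    ultimately have "?S = {}" by auto
    then show ?thesis by simp
  qed
  have dj: "\<not> ((s-c \<le> i \<and> i < s) \<and> (2*s-c \<le> i \<and> i < 2*s))" using cs by auto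
  show ?thesis
  proof (cases "s-c \<le> i \<and> i < s")
    case True then show ?thesis unfolding sympl_def using dj by (simp only: c1) simp
  next
    case False
    show ?thesis
    proof (cases "2*s-c \<le> i \<and> i < 2*s")
      case True then show ?thesis unfolding sympl_def using dj False by (simp only: c2) auto
    next
      case F2: False then show ?thesis unfolding sympl_def using False F2 by (simp only: c3[OF False F2]) auto
    qed
  qed
qed

lemma split_n: "{..<n} = {..<n-c} \<union> {n-c..<n}" using cn by auto

lemma sympl_split: "sympl {..<n} p q = (sympl {..<n-c} p q \<noteq> sympl {n-c..<n} p q)"
  unfolding split_n by (rule sympl_Un) auto

definition R :: "nat \<Rightarrow> pv" where "R i = trunc (n-c) (r i)"

lemma commute_R:
  assumes a: "a < n-k" and b: "b < n-k"
  shows "commute (n-c) (R a) (R b) = (\<not> ((s-c \<le> b \<and> b < s \<and> a = b + s) \<or> (2*s-c \<le> b \<and> b < 2*s \<and> a = b - s)))"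
proof -
  have "\<not> sympl {..<n} (r a) (r b)" using comm[OF a b] commute_sympl by simp
  then have e1: "sympl {..<n-c} (r a) (r b) = sympl {n-c..<n} (r a) (r b)" using sympl_split by simp
  have e2: "sympl {..<n-c} (R a) (R b) = sympl {..<n-c} (r a) (r b)"
    unfolding R_def trunc_def by (rule sympl_cong) auto
  have f1: "snd (r a) (n-c+(b-(s-c))) = (a = b + s)" if h: "s-c \<le> b" "b < s"
    using bob_snd[OF a, of "b-(s-c)"] h cs by auto
  have f2: "fst (r a) (n-c+(b-(2*s-c))) = (a = b - s)" if h: "2*s-c \<le> b" "b < 2*s"
    using bob_fst[OF a, of "b-(2*s-c)"] h cs by auto
  show ?thesis unfolding commute_sympl e2 e1 sympl_bob[OF b] using f1 f2 by blast
qed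

end

lemma weight_pauli: "p \<in> pauli a \<Longrightarrow> a \<le> b \<Longrightarrow> weight b p = weight a p"
proof -
  assume p: "p \<in> pauli a" "a \<le> b"
  have "{j. j < b \<and> (fst p j \<or> snd p j)} = {j. j < a \<and> (fst p j \<or> snd p j)}"
    using p unfolding pauli_def by (auto simp: not_le[symmetric])
  then show ?thesis unfolding weight_def by simp
qed

context P1 begin

definition gg :: "nat \<Rightarrow> pv" where "gg i = R (pi (i + c))"
definition hh :: "nat \<Rightarrow> pv" where "hh j = R (pi j)"

lemma pi1: "j < c \<Longrightarrow> pi j = s-c+j" unfolding pi_def by simp
lemma pi2: "c \<le> j \<Longrightarrow> j < 2*c \<Longrightarrow> pi j = 2*s-c+(j-c)" unfolding pi_def using cs by auto

lemma R_fun: "(\<lambda>i. trunc (n-c) (r i)) = R" by (simp add: fun_eq_iff R_def)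

lemma comm_rowspan: "P \<in> rowspan (n-k) r \<Longrightarrow> j < n-k \<Longrightarrow> \<not> sympl {..<n} P (r j)"
proof -
  assume P: "P \<in> rowspan (n-k) r" and j: "j < n-k"
  have "\<forall>i<n-k. \<not> sympl {..<n} (r j) (r i)" using comm j commute_sympl by auto
  then have "\<not> sympl {..<n} (r j) P" using sympl_rowspan[of "{..<n}" "n-k" "r j" r P] P by simp
  then show ?thesis using sympl_sym by metis
qed

lemma indep_R: "indep (n-k) R"
  unfolding indep_def
proof (intro allI impI notI)
  fix T assume T: "T \<subseteq> {..<n-k}" "T \<noteq> {}" and z: "psum R T = pzero"
  define P where "P = psum r T"
  have Pr: "P \<in> rowspan (n-k) r" unfolding P_def using psum_in[OF T(1)] .
  have Pn: "P \<in> pauli n" using rowspan_pauli[of "n-k" r n] rp Pr by auto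
  have Pnz: "P \<noteq> pzero" using ind T unfolding indep_def P_def by auto
  have tr: "trunc (n-c) P = pzero" using z psum_trunc[of "n-c" r T] unfolding R_fun P_def by simp
  have low: "\<forall>j\<in>{..<n-c}. \<not> fst P j \<and> \<not> snd P j"
  proof
    fix j assume "j \<in> {..<n-c}"
    then show "\<not> fst P j \<and> \<not> snd P j" using tr unfolding trunc_def pzero_def by (auto simp: prod_eq_iff fun_eq_iff)
  qed
  have comP: "\<And>i. i < n-k \<Longrightarrow> \<not> sympl {n-c..<n} P (r i)"
  proof -
    fix i assume i: "i < n-k"
    have "\<not> sympl {..<n} P (r i)" using comm_rowspan[OF Pr i] .
    moreover have "\<not> sympl {..<n-c} P (r i)" using sympl_zero low by blast
    ultimately show "\<not> sympl {n-c..<n} P (r i)" using sympl_split by simp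
  qed
  have bob: "\<not> fst P (n-c+b) \<and> \<not> snd P (n-c+b)" if b: "b < c" for b
  proof -
    have i1: "2*s-c+b < n-k" "s-c+b < n-k" using b cs s2 by auto
    have "\<not> fst P (n-c+b)" using comP[OF i1(1)] sympl_bob[OF i1(1), of P] b cs by auto
    moreover have "\<not> snd P (n-c+b)" using comP[OF i1(2)] sympl_bob[OF i1(2), of P] b cs by auto
    ultimately show ?thesis by simp
  qed
  have "P = pzero"
  proof -
    have "\<not> fst P j \<and> \<not> snd P j" for j
    proof (cases "j < n-c")
      case True then show ?thesis using low by auto
    next
      case False
      show ?thesis
      proof (cases "j < n")
        case True
        then have "j = n-c+(j-(n-c))" "j-(n-c) < c" using False by auto
        then show ?thesis using bob by metis
      next
        case False then show ?thesis using Pn unfolding pauli_def by auto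
      qed
    qed
    then show ?thesis unfolding pzero_def by (auto simp: prod_eq_iff fun_eq_iff)
  qed
  then show False using Pnz by simp
qed

lemma fam_eq: "(if j < c then hh j else gg (j - c)) = R (pi j)"
  unfolding hh_def gg_def by simp

lemma rowspan_fam: "rowspan (n-k) (\<lambda>j. if j < c then hh j else gg (j - c)) = rowspan (n-k) R"
  unfolding fam_eq using rowspan_perm[OF pi_bij, of R] by simp

lemma ext_eq:
  assumes j: "j < n-k"
  shows "(if j < c then with_X (n-c+j) (hh j) else if j - c < c then with_Z (n-c+(j-c)) (gg (j-c)) else gg (j-c)) = r (pi j)"
proof (cases "j < c")
  case True
  define a where "a = s-c+j"
  have pa: "pi j = a" using pi1[OF True] a_def by simp
  have a: "a < n-k" using pi_lt[OF j] unfolding pa .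
  have f: "fst (r a) x = ((fst (r a) x \<and> x < n-c) \<or> x = n-c+j)" for x
    using std_bob_fst[OF a, of x] True cs cn unfolding a_def by auto
  have g: "snd (r a) x = (snd (r a) x \<and> x < n-c)" for x
    using std_bob_snd[OF a, of x] True cs cn unfolding a_def by auto
  have "with_X (n-c+j) (hh j) = r a" unfolding hh_def pa R_def with_X_def trunc_def
    using f g by (simp add: prod_eq_iff fun_eq_iff)
  then show ?thesis using True pa by simp
next
  case False
  show ?thesis
  proof (cases "j - c < c")
    case True
    define a where "a = 2*s-c+(j-c)"
    have pa: "pi j = a" using pi2 False True a_def by simp
    have a: "a < n-k" using pi_lt[OF j] unfolding pa .
    have gj: "gg (j-c) = R a" unfolding gg_def using False pa by simp
    have f: "fst (r a) x = (fst (r a) x \<and> x < n-c)" for x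
      using std_bob_fst[OF a, of x] True False cs cn unfolding a_def by auto
    have g: "snd (r a) x = ((snd (r a) x \<and> x < n-c) \<or> x = n-c+(j-c))" for x
      using std_bob_snd[OF a, of x] True False cs cn unfolding a_def by auto
    have "with_Z (n-c+(j-c)) (gg (j-c)) = r a" unfolding gj R_def with_Z_def trunc_def
      using f g by (simp add: prod_eq_iff fun_eq_iff)
    then show ?thesis using True False pa by simp
  next
    case F2: False
    have gj: "gg (j-c) = R (pi j)" unfolding gg_def using False by simp
    have "R (pi j) = r (pi j)" unfolding R_def using trunc_nobob[OF pi_lt[OF j] pi_nobob] F2 by simp
    then show ?thesis using False F2 gj by simp
  qed
qed

lemma ext_stab: "stab_code n k d (\<lambda>j. if j < c then with_X (n-c+j) (hh j) else if j - c < c then with_Z (n-c+(j-c)) (gg (j-c)) else gg (j-c))"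
  "rowspan (n-k) (\<lambda>j. if j < c then with_X (n-c+j) (hh j) else if j - c < c then with_Z (n-c+(j-c)) (gg (j-c)) else gg (j-c)) = rowspan (n-k) r"
  using stab_code_transfer[OF sc pi_bij, of "\<lambda>j. if j < c then with_X (n-c+j) (hh j) else if j - c < c then with_Z (n-c+(j-c)) (gg (j-c)) else gg (j-c)"]
    ext_eq by auto

end

lemma stab_code_dist:
  assumes "stab_code n k d r" "p \<in> normalizer n (rowspan (n-k) r)" "p \<notin> rowspan (n-k) r"
  shows "d \<le> weight n p"
  using assms unfolding stab_code_def by simp

lemma stab_correct:
  assumes sc: "stab_code n k d r" and w: "weight n e1 \<le> (d-1) div 2" "weight n e2 \<le> (d-1) div 2"
  shows "padd e1 e2 \<in> rowspan (n-k) r \<or> padd e1 e2 \<notin> normalizer n (rowspan (n-k) r)"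
proof (rule ccontr)
  assume "\<not> ?thesis"
  then have "d \<le> weight n (padd e1 e2)" using stab_code_dist[OF sc] by simp
  moreover have "weight n (padd e1 e2) \<le> weight n e1 + weight n e2" by (rule weight_padd)
  moreover have "1 \<le> d" using stab_code_d_pos[OF sc] .
  ultimately show False using w by linarith
qed

context P1 begin

lemma norm_item:
  assumes p: "p \<in> normalizer (n-c) (rowspan (n-k) R)" "p \<notin> rowspan (n-c-k-c) (\<lambda>i. gg (c+i))"
  shows "d \<le> weight (n-c) p"
proof -
  have pp: "p \<in> pauli (n-c)" using p(1) unfolding normalizer_gen by simp
  have pc: "\<And>i. i < n-k \<Longrightarrow> commute (n-c) p (R i)" using p(1) unfolding normalizer_gen by simp
  have pzhi: "\<forall>j\<in>{n-c..<n}. \<not> fst p j \<and> \<not> snd p j" using pp unfolding pauli_def by auto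
  have "commute n p (r i)" if i: "i < n-k" for i
  proof -
    have "\<not> sympl {..<n-c} p (R i)" using pc[OF i] commute_sympl by simp
    moreover have "sympl {..<n-c} p (R i) = sympl {..<n-c} p (r i)"
      unfolding R_def trunc_def by (rule sympl_cong) auto
    moreover have "\<not> sympl {n-c..<n} p (r i)" using sympl_zero pzhi by blast
    ultimately show ?thesis unfolding commute_sympl using sympl_split by simp
  qed
  moreover have "p \<in> pauli n" using pauli_mono[OF pp] by simp
  ultimately have pn: "p \<in> normalizer n (rowspan (n-k) r)" unfolding normalizer_gen by simp
  have wt: "weight n p = weight (n-c) p" by (rule weight_pauli[OF pp]) simp
  show ?thesis
  proof (cases "p \<in> rowspan (n-k) r")
    case False
    then show ?thesis using stab_code_dist[OF sc pn False] wt by simp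
  next
    case True
    then obtain T where T: "T \<subseteq> {..<n-k}" "p = psum r T" unfolding rowspan_def by blast
    have nb: "nobob t" if t: "t \<in> T" for t
    proof -
      have nb1: "s-c+b \<notin> T \<and> 2*s-c+b \<notin> T" if b: "b < c" for b
      proof -
        have "\<not> fst p (n-c+b)" "\<not> snd p (n-c+b)" using pp unfolding pauli_def by auto
        then show ?thesis using psum_bob[OF T(1) b] T(2) by simp
      qed
      have "\<not> (s-c \<le> t \<and> t < s)"
      proof
        assume h: "s-c \<le> t \<and> t < s"
        then have "t - (s-c) < c" "s-c+(t-(s-c)) = t" by auto
        then show False using nb1 t by metis
      qed
      moreover have "\<not> (2*s-c \<le> t \<and> t < 2*s)"
      proof
        assume h: "2*s-c \<le> t \<and> t < 2*s"
        then have "t - (2*s-c) < c" "2*s-c+(t-(2*s-c)) = t" using cs by auto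
        then show False using nb1 t by metis
      qed
      ultimately show ?thesis unfolding nobob_def by simp
    qed
    define f where "f i = pi (i + 2*c)" for i
    define T' where "T' = {i. i < n-c-k-c \<and> f i \<in> T}"
    have fT: "f ` T' = T"
    proof
      show "f ` T' \<subseteq> T" unfolding T'_def by auto
      show "T \<subseteq> f ` T'"
      proof
        fix t assume t: "t \<in> T"
        then have "t < n-k" using T by auto
        then obtain j where j: "2*c \<le> j" "j < n-k" "pi j = t" using nobob_pi nb[OF t] by blast
        then have "j - 2*c \<in> T'" unfolding T'_def f_def using t by auto
        moreover have "f (j - 2*c) = t" unfolding f_def using j by simp
        ultimately show "t \<in> f ` T'" by blast
      qed
    qed
    have inj: "inj_on f T'"
    proof -
      have ip: "inj_on pi {..<n-k}" using pi_bij bij_betw_def by blast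
      show ?thesis unfolding inj_on_def
      proof (intro ballI impI)
        fix x y assume x: "x \<in> T'" and y: "y \<in> T'" and e: "f x = f y"
        have "x + 2*c \<in> {..<n-k}" "y + 2*c \<in> {..<n-k}" using x y unfolding T'_def by auto
        then have "x + 2*c = y + 2*c" using inj_onD[OF ip] e unfolding f_def by blast
        then show "x = y" by simp
      qed
    qed
    have "psum (\<lambda>i. gg (c+i)) T' = psum (\<lambda>i. R (f i)) T'"
      by (rule psum_cong) (simp add: gg_def f_def add.commute add.left_commute mult_2)
    also have "\<dots> = trunc (n-c) (psum (\<lambda>i. r (f i)) T')"
      unfolding R_def using psum_trunc[of "n-c" "\<lambda>i. r (f i)" T'] by simp
    also have "\<dots> = trunc (n-c) p" using psum_reindex[OF inj, of r] fT T(2) by simp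
    also have "\<dots> = p" using trunc_id[OF pp] .
    finally have "p \<in> rowspan (n-c-k-c) (\<lambda>i. gg (c+i))"
      using psum_in[of T' "n-c-k-c"] unfolding T'_def by auto
    then show ?thesis using p(2) by simp
  qed
qed

lemma main1: "eaqec_AB (n-c) k d c (\<lambda>i. trunc (n-c) (r i))"
proof -
  have mm: "n - c + c - k = n - k" "n - c + c = n" using cn by auto
  have pis: "\<And>j. j < c \<Longrightarrow> pi j = s-c+j" "\<And>j. c \<le> j \<Longrightarrow> j < 2*c \<Longrightarrow> pi j = 2*s-c+(j-c)"
    "\<And>j. 2*c \<le> j \<Longrightarrow> nobob (pi j)" using pi1 pi2 pi_nobob by auto
  have lt: "\<And>j. j < n-k \<Longrightarrow> pi j < n-k" using pi_lt .
  show ?thesis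
    unfolding eaqec_AB_def Let_def mm
    apply (rule exI[of _ gg], rule exI[of _ hh], intro conjI)
    subgoal using s2 cs kn by simp
    subgoal using trunc_pauli by simp
    subgoal unfolding R_fun using indep_R .
    subgoal unfolding R_fun using rowspan_fam by simp
    subgoal unfolding gg_def R_def using trunc_pauli by simp
    subgoal unfolding hh_def R_def using trunc_pauli by simp
    subgoal
    proof (intro allI impI)
      fix i assume i: "i < c"
      have a: "pi (i+c) < n-k" "pi i < n-k" using lt i s2 cs by auto
      show "\<not> commute (n - c) (gg i) (hh i)" unfolding gg_def hh_def commute_R[OF a]
        using pis i cs by auto
    qed
    subgoal
    proof (intro allI impI)
      fix i j assume i: "i < n-c-k" and j: "j < n-c-k"
      have a: "pi (i+c) < n-k" "pi (j+c) < n-k" using lt i j by auto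
      show "commute (n - c) (gg i) (gg j)" unfolding gg_def hh_def commute_R[OF a]
      proof
        assume h: "s - c \<le> pi (j + c) \<and> pi (j + c) < s \<and> pi (i + c) = pi (j + c) + s \<or>
             2 * s - c \<le> pi (j + c) \<and> pi (j + c) < 2 * s \<and> pi (i + c) = pi (j + c) - s"
        show False
        proof (cases "j < c")
          case True
          then have pj: "pi (j+c) = 2*s-c+j" using pis by simp
          show False
          proof (cases "i < c")
            case True
            then have "pi (i+c) = 2*s-c+i" using pis by simp
            then show False using h pj True \<open>j < c\<close> cs by auto
          next
            case False
            then have "nobob (pi (i+c))" using pis by simp
            then show False using h pj True cs unfolding nobob_def by auto
          qed
        next
          case False
          then have "nobob (pi (j+c))" using pis by simp
          then show False using h cs unfolding nobob_def by auto
        qed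
      qed
    qed
    subgoal
    proof (intro allI impI)
      fix i j assume i: "i < c" and j: "j < c"
      have a: "pi i < n-k" "pi j < n-k" using lt i j s2 cs by auto
      show "commute (n - c) (hh i) (hh j)" unfolding hh_def commute_R[OF a]
        using pis i j cs by auto
    qed
    subgoal
    proof (intro allI impI)
      fix i j assume i: "i < n-c-k" and j: "j < c" and ij: "i \<noteq> j"
      have a: "pi (i+c) < n-k" "pi j < n-k" using lt i j s2 cs by auto
      show "commute (n - c) (gg i) (hh j)" unfolding gg_def hh_def commute_R[OF a]
      proof
        assume h: "s - c \<le> pi j \<and> pi j < s \<and> pi (i + c) = pi j + s \<or>
             2 * s - c \<le> pi j \<and> pi j < 2 * s \<and> pi (i + c) = pi j - s"
        have pj: "pi j = s-c+j" using pis j by simp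
        show False
        proof (cases "i < c")
          case True
          then have "pi (i+c) = 2*s-c+i" using pis by simp
          then show False using h pj True j ij cs by auto
        next
          case False
          then have "nobob (pi (i+c))" using pis by simp
          then show False using h pj j cs unfolding nobob_def by auto
        qed
      qed
    qed
    subgoal using ext_stab(1) .
    subgoal unfolding rowspan_fam using norm_item by blast
    subgoal using stab_correct[OF ext_stab(1)] by blast
    done
qed

end

definition dotp :: "'a set \<Rightarrow> ('a \<Rightarrow> bool) \<Rightarrow> ('a \<Rightarrow> bool) \<Rightarrow> bool" where
  "dotp C u w = odd (card {x\<in>C. u x \<and> w x})"

lemma span_full:
  assumes "finite C"
  shows "\<And>W. \<forall>w\<in>W. \<forall>x. x \<notin> C \<longrightarrow> \<not> w x \<Longrightarrow> (\<lambda>_. False) \<in> W \<Longrightarrow>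
    \<forall>v\<in>W. \<forall>w\<in>W. (\<lambda>x. v x \<noteq> w x) \<in> W \<Longrightarrow>
    \<forall>u. (\<forall>x. x \<notin> C \<longrightarrow> \<not> u x) \<longrightarrow> (\<exists>x. u x) \<longrightarrow> (\<exists>w\<in>W. dotp C u w) \<Longrightarrow>
    \<forall>v. (\<forall>x. x \<notin> C \<longrightarrow> \<not> v x) \<longrightarrow> v \<in> W"
  using assms
proof (induction C rule: finite_induct)
  case empty
  then show ?case
  proof (intro allI impI)
    fix v :: "'a \<Rightarrow> bool" assume "\<forall>x. x \<notin> {} \<longrightarrow> \<not> v x"
    then have "v = (\<lambda>_. False)" by auto
    then show "v \<in> W" using empty by simp
  qed
next
  case (insert c C W)
  note sup = insert.prems(1) and z = insert.prems(2) and cl = insert.prems(3) and orth = insert.prems(4)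
  obtain g0 where g0: "g0 \<in> W" "g0 c"
  proof -
    have "\<exists>w\<in>W. dotp (insert c C) (\<lambda>x. x = c) w" using orth by auto
    then obtain w where w: "w \<in> W" "dotp (insert c C) (\<lambda>x. x = c) w" by blast
    have "{x\<in>insert c C. x = c \<and> w x} = (if w c then {c} else {})" by auto
    then have "w c" using w(2) unfolding dotp_def by (auto split: if_splits)
    then show ?thesis using that w(1) by blast
  qed
  define W' where "W' = {w\<in>W. \<not> w c}"
  have IH: "\<forall>v. (\<forall>x. x \<notin> C \<longrightarrow> \<not> v x) \<longrightarrow> v \<in> W'"
  proof (rule insert.IH)
    show "\<forall>w\<in>W'. \<forall>x. x \<notin> C \<longrightarrow> \<not> w x" using sup unfolding W'_def by auto
    show "(\<lambda>_. False) \<in> W'" using z unfolding W'_def by auto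
    show "\<forall>v\<in>W'. \<forall>w\<in>W'. (\<lambda>x. v x \<noteq> w x) \<in> W'" using cl unfolding W'_def by auto
    show "\<forall>u. (\<forall>x. x \<notin> C \<longrightarrow> \<not> u x) \<longrightarrow> (\<exists>x. u x) \<longrightarrow> (\<exists>w\<in>W'. dotp C u w)"
    proof (intro allI impI)
      fix u :: "'a \<Rightarrow> bool" assume us: "\<forall>x. x \<notin> C \<longrightarrow> \<not> u x" and un: "\<exists>x. u x"
      show "\<exists>w\<in>W'. dotp C u w"
      proof (rule ccontr)
        assume no: "\<not> (\<exists>w\<in>W'. dotp C u w)"
        define u' where "u' x = (if x = c then dotp C u g0 else u x)" for x
        have "\<forall>x. x \<notin> insert c C \<longrightarrow> \<not> u' x" using us unfolding u'_def by auto
        moreover have "\<exists>x. u' x" using un us insert.hyps(2) unfolding u'_def by metis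
        ultimately obtain w where w: "w \<in> W" "dotp (insert c C) u' w" using orth by blast
        have cu: "u c = False" using us insert.hyps(2) by auto
        have split: "dotp (insert c C) u' w = ((u' c \<and> w c) \<noteq> dotp C u w)"
        proof -
          have e: "{x\<in>insert c C. u' x \<and> w x} = (if u' c \<and> w c then insert c {x\<in>C. u x \<and> w x} else {x\<in>C. u x \<and> w x})"
            using insert.hyps(2) unfolding u'_def by auto
          show ?thesis unfolding dotp_def e using insert.hyps by auto
        qed
        show False
        proof (cases "w c")
          case False
          then have "w \<in> W'" unfolding W'_def using w by simp
          then have "\<not> dotp C u w" using no by blast
          then show False using split w(2) False by simp
        next
          case True
          have "(\<lambda>x. w x \<noteq> g0 x) \<in> W" using cl w(1) g0(1) by blast
          then have "(\<lambda>x. w x \<noteq> g0 x) \<in> W'" unfolding W'_def using True g0 by simp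
          then have nd: "\<not> dotp C u (\<lambda>x. w x \<noteq> g0 x)" using no by blast
          have "dotp C u (\<lambda>x. w x \<noteq> g0 x) = (dotp C u w \<noteq> dotp C u g0)"
          proof -
            have "{x\<in>C. u x \<and> (w x \<noteq> g0 x)} = {x\<in>C. (u x \<and> w x) \<noteq> (u x \<and> g0 x)}" by auto
            then show ?thesis unfolding dotp_def using odd_card_xor[OF insert.hyps(1), of "\<lambda>x. u x \<and> w x" "\<lambda>x. u x \<and> g0 x"]
              by simp
          qed
          then show False using nd split w(2) True unfolding u'_def by simp
        qed
      qed
    qed
  qed
  show ?case
  proof (intro allI impI)
    fix v :: "'a \<Rightarrow> bool" assume vs: "\<forall>x. x \<notin> insert c C \<longrightarrow> \<not> v x"
    show "v \<in> W"
    proof (cases "v c")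
      case False
      then have "\<forall>x. x \<notin> C \<longrightarrow> \<not> v x" using vs by auto
      then show ?thesis using IH unfolding W'_def by auto
    next
      case True
      have "\<forall>x. x \<notin> C \<longrightarrow> \<not> (v x \<noteq> g0 x)" using vs sup g0 True by auto
      then have vg: "(\<lambda>x. v x \<noteq> g0 x) \<in> W" using IH unfolding W'_def by auto
      have "(\<lambda>x. (v x \<noteq> g0 x) \<noteq> g0 x) \<in> W" using cl[rule_format, OF vg g0(1)] by simp
      moreover have "(\<lambda>x. (v x \<noteq> g0 x) \<noteq> g0 x) = v" by auto
      ultimately show ?thesis by simp
    qed
  qed
qed


definition inB :: "nat set \<Rightarrow> pv \<Rightarrow> bool" where
  "inB B p \<longleftrightarrow> (\<forall>j. j \<notin> B \<longrightarrow> \<not> fst p j \<and> \<not> snd p j)"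

definition enc :: "pv \<Rightarrow> bool \<times> nat \<Rightarrow> bool" where
  "enc p x = (if fst x then fst p (snd x) else snd p (snd x))"

definition swp :: "pv \<Rightarrow> pv" where "swp p = (snd p, fst p)"

definition dec :: "(bool \<times> nat \<Rightarrow> bool) \<Rightarrow> pv" where
  "dec u = (\<lambda>j. u (True, j), \<lambda>j. u (False, j))"

lemma card_pairs:
  assumes "finite B"
  shows "card {x\<in>UNIV \<times> B. F x} = card {j\<in>B. F (True, j)} + card {j\<in>B. F (False, j)}"
proof -
  have e: "{x\<in>UNIV \<times> B. F x} = Pair True ` {j\<in>B. F (True, j)} \<union> Pair False ` {j\<in>B. F (False, j)}"
  proof
    show "{x\<in>UNIV \<times> B. F x} \<subseteq> Pair True ` {j\<in>B. F (True, j)} \<union> Pair False ` {j\<in>B. F (False, j)}"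
    proof
      fix x assume "x \<in> {x\<in>UNIV \<times> B. F x}"
      then show "x \<in> Pair True ` {j\<in>B. F (True, j)} \<union> Pair False ` {j\<in>B. F (False, j)}"
        by (cases x; cases "fst x") auto
    qed
  qed auto
  have "card (Pair True ` {j\<in>B. F (True, j)} \<union> Pair False ` {j\<in>B. F (False, j)}) =
        card (Pair True ` {j\<in>B. F (True, j)}) + card (Pair False ` {j\<in>B. F (False, j)})"
    using assms by (intro card_Un_disjoint) auto
  also have "\<dots> = card {j\<in>B. F (True, j)} + card {j\<in>B. F (False, j)}"
    by (simp add: card_image inj_on_def)
  finally show ?thesis using e by simp
qed

lemma sympl_dotp:
  assumes "finite B"
  shows "sympl B p q = dotp (UNIV \<times> B) (enc p) (enc (swp q))"
proof -
  have "card {x\<in>UNIV \<times> B. enc p x \<and> enc (swp q) x} =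
        card {j\<in>B. fst p j \<and> snd q j} + card {j\<in>B. snd p j \<and> fst q j}"
    using card_pairs[OF assms, of "\<lambda>x. enc p x \<and> enc (swp q) x"] unfolding enc_def swp_def by simp
  moreover have "odd (card {j\<in>B. (fst p j \<and> snd q j) \<noteq> (snd p j \<and> fst q j)}) =
        (odd (card {j\<in>B. fst p j \<and> snd q j}) \<noteq> odd (card {j\<in>B. snd p j \<and> fst q j}))"
    by (rule odd_card_xor[OF assms])
  ultimately show ?thesis unfolding sympl_def dotp_def by simp
qed

lemma span_full_pv:
  assumes B: "finite B" and sup: "\<forall>w\<in>W. inB B w" and z: "pzero \<in> W"
    and cl: "\<forall>v\<in>W. \<forall>w\<in>W. padd v w \<in> W"
    and orth: "\<forall>u. inB B u \<longrightarrow> u \<noteq> pzero \<longrightarrow> (\<exists>w\<in>W. sympl B u w)"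
    and v: "inB B v"
  shows "v \<in> W"
proof -
  define C where "C = (UNIV :: bool set) \<times> B"
  define Wg where "Wg = (\<lambda>p. enc (swp p)) ` W"
  have fC: "finite C" unfolding C_def using B by simp
  have encsup: "\<And>p x. inB B p \<Longrightarrow> x \<notin> C \<Longrightarrow> \<not> enc (swp p) x"
    unfolding inB_def C_def enc_def swp_def by auto
  have all: "\<forall>v. (\<forall>x. x \<notin> C \<longrightarrow> \<not> v x) \<longrightarrow> v \<in> Wg"
  proof (rule span_full[OF fC])
    show "\<forall>w\<in>Wg. \<forall>x. x \<notin> C \<longrightarrow> \<not> w x" unfolding Wg_def using sup encsup by auto
    have "enc (swp pzero) = (\<lambda>_. False)" unfolding enc_def swp_def pzero_def by auto
    then show "(\<lambda>_. False) \<in> Wg" unfolding Wg_def using z by (metis image_eqI)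
    have ep: "\<And>p q. enc (swp (padd p q)) = (\<lambda>x. enc (swp p) x \<noteq> enc (swp q) x)"
      unfolding enc_def swp_def padd_def by auto
    show "\<forall>a\<in>Wg. \<forall>b\<in>Wg. (\<lambda>x. a x \<noteq> b x) \<in> Wg"
    proof (intro ballI)
      fix a b assume a: "a \<in> Wg" and b: "b \<in> Wg"
      obtain p where p: "p \<in> W" "a = enc (swp p)" using a unfolding Wg_def by blast
      obtain q where q: "q \<in> W" "b = enc (swp q)" using b unfolding Wg_def by blast
      have "(\<lambda>x. a x \<noteq> b x) = enc (swp (padd p q))" using ep p q by simp
      moreover have "padd p q \<in> W" using cl p q by blast
      ultimately show "(\<lambda>x. a x \<noteq> b x) \<in> Wg" unfolding Wg_def by blast
    qed
    show "\<forall>u. (\<forall>x. x \<notin> C \<longrightarrow> \<not> u x) \<longrightarrow> (\<exists>x. u x) \<longrightarrow> (\<exists>w\<in>Wg. dotp C u w)"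
    proof (intro allI impI)
      fix u :: "bool \<times> nat \<Rightarrow> bool" assume us: "\<forall>x. x \<notin> C \<longrightarrow> \<not> u x" and un: "\<exists>x. u x"
      have eu: "enc (dec u) = u" unfolding enc_def dec_def by (auto simp: fun_eq_iff)
      have "inB B (dec u)" using us unfolding inB_def dec_def C_def by auto
      moreover have "dec u \<noteq> pzero"
      proof
        assume "dec u = pzero"
        then have "enc (dec u) = enc pzero" by simp
        then have "u = (\<lambda>_. False)" using eu unfolding enc_def pzero_def by (auto simp: fun_eq_iff)
        then show False using un by simp
      qed
      ultimately obtain w where w: "w \<in> W" "sympl B (dec u) w" using orth by blast
      then have "dotp C u (enc (swp w))" using sympl_dotp[OF B, of "dec u" w] eu unfolding C_def by simp
      then show "\<exists>w\<in>Wg. dotp C u w" unfolding Wg_def using w(1) by blast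
    qed
  qed
  have "enc (swp v) \<in> Wg" using all encsup[OF v] by blast
  then obtain w where w: "w \<in> W" "enc (swp v) = enc (swp w)" unfolding Wg_def by blast
  have "v = w"
  proof -
    have "\<And>j. fst v j = fst w j" using fun_cong[OF w(2), of "(False, j)" for j] unfolding enc_def swp_def by simp
    moreover have "\<And>j. snd v j = snd w j" using fun_cong[OF w(2), of "(True, j)" for j] unfolding enc_def swp_def by simp
    ultimately show ?thesis by (simp add: prod_eq_iff fun_eq_iff)
  qed
  then show ?thesis using w by simp
qed


abbreviation sp :: "pv list \<Rightarrow> pv set" where "sp L \<equiv> rowspan (length L) ((!) L)"

fun grd :: "(nat \<Rightarrow> pv) \<Rightarrow> pv list \<Rightarrow> nat \<Rightarrow> pv list" where
  "grd v L 0 = L"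
| "grd v L (Suc i) = (if v i \<in> sp (grd v L i) then grd v L i else grd v L i @ [v i])"

lemma sp_mono: "sp L \<subseteq> sp (L @ M)"
proof
  fix p assume "p \<in> sp L"
  then obtain T where T: "T \<subseteq> {..<length L}" "p = psum ((!) L) T" unfolding rowspan_def by blast
  have "psum ((!) L) T = psum ((!) (L @ M)) T" using T(1) by (intro psum_cong) (auto simp: nth_append)
  moreover have "T \<subseteq> {..<length (L @ M)}" using T(1) by auto
  ultimately show "p \<in> sp (L @ M)" using T(2) psum_in by metis
qed

lemma indep_snoc:
  assumes ind: "indep (length L) ((!) L)" and v: "v \<notin> sp L"
  shows "indep (length (L @ [v])) ((!) (L @ [v]))"
  unfolding indep_def
proof (intro allI impI)
  fix T assume T: "T \<subseteq> {..<length (L @ [v])}" "T \<noteq> {}"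
  show "psum ((!) (L @ [v])) T \<noteq> pzero"
  proof (cases "length L \<in> T")
    case False
    then have T0: "T \<subseteq> {..<length L}" using T(1) by (auto simp: less_Suc_eq)
    have "psum ((!) (L @ [v])) T = psum ((!) L) T" using T0 by (intro psum_cong) (auto simp: nth_append)
    then show ?thesis using ind T0 T(2) unfolding indep_def by simp
  next
    case True
    define T0 where "T0 = T - {length L}"
    have T0s: "T0 \<subseteq> {..<length L}" using T(1) unfolding T0_def by (auto simp: less_Suc_eq)
    have fT0: "finite T0" using T0s finite_subset by auto
    have TT: "T = insert (length L) T0" "length L \<notin> T0" using True unfolding T0_def by auto
    have "psum ((!) (L @ [v])) T = padd (psum ((!) (L @ [v])) T0) v"
      unfolding TT(1) using psum_insert[OF fT0 TT(2)] by simp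
    moreover have "psum ((!) (L @ [v])) T0 = psum ((!) L) T0" using T0s by (intro psum_cong) (auto simp: nth_append)
    ultimately have e: "psum ((!) (L @ [v])) T = padd (psum ((!) L) T0) v" by simp
    show ?thesis
    proof
      assume "psum ((!) (L @ [v])) T = pzero"
      then have "padd (padd (psum ((!) L) T0) v) v = padd pzero v" using e by simp
      then have "v = psum ((!) L) T0" by (simp add: padd_cancel)
      then show False using v psum_in[OF T0s] by simp
    qed
  qed
qed

lemma grd_props:
  assumes ind: "indep (length L) ((!) L)"
  shows "(\<exists>M. grd v L i = L @ M \<and> set M \<subseteq> v ` {..<i}) \<and> indep (length (grd v L i)) ((!) (grd v L i))
         \<and> (\<forall>j<i. v j \<in> sp (grd v L i))"
proof (induction i)
  case 0 then show ?case using ind by simp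
next
  case (Suc i)
  then obtain M where M: "grd v L i = L @ M" "set M \<subseteq> v ` {..<i}" by blast
  show ?case
  proof (cases "v i \<in> sp (grd v L i)")
    case True
    then show ?thesis using Suc M by (auto simp: less_Suc_eq)
  next
    case False
    have "grd v L (Suc i) = L @ (M @ [v i])" using False M by simp
    moreover have "set (M @ [v i]) \<subseteq> v ` {..<Suc i}" using M by auto
    moreover have "indep (length (grd v L (Suc i))) ((!) (grd v L (Suc i)))"
      using indep_snoc[OF _ False] Suc False by simp
    moreover have "\<forall>j<Suc i. v j \<in> sp (grd v L (Suc i))"
    proof (intro allI impI)
      fix j assume j: "j < Suc i"
      show "v j \<in> sp (grd v L (Suc i))"
      proof (cases "j < i")
        case True
        then have "v j \<in> sp (grd v L i)" using Suc by simp
        then show ?thesis using sp_mono[of "grd v L i" "[v i]"] False by auto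
      next
        case False2: False
        then have "j = i" using j by simp
        have "length (grd v L i) < length (grd v L i @ [v i])" by simp
        then have "(grd v L i @ [v i]) ! length (grd v L i) \<in> sp (grd v L i @ [v i])" by (rule gen_in_rowspan)
        then show ?thesis using False \<open>j = i\<close> by simp
      qed
    qed
    ultimately show ?thesis by blast
  qed
qed

lemma card_rowspan:
  assumes ind: "indep l f"
  shows "card (rowspan l f) = 2 ^ l"
proof -
  have e: "rowspan l f = psum f ` Pow {..<l}" unfolding rowspan_def by auto
  have "inj_on (psum f) (Pow {..<l})"
  proof (rule inj_onI)
    fix A B assume A: "A \<in> Pow {..<l}" and B: "B \<in> Pow {..<l}" and eq: "psum f A = psum f B"
    have fin: "finite A" "finite B" using A B finite_subset by auto
    have "psum f (sdiff A B) = pzero" using psum_sdiff[OF fin, of f] eq by simp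
    moreover have "sdiff A B \<subseteq> {..<l}" using A B unfolding sdiff_def by auto
    ultimately have "sdiff A B = {}" using ind unfolding indep_def by blast
    then show "A = B" unfolding sdiff_def by auto
  qed
  then have "card (rowspan l f) = card (Pow {..<l})" unfolding e by (rule card_image)
  also have "\<dots> = 2 ^ l" by (simp add: card_Pow)
  finally show ?thesis .
qed


lemma card_eq_single2: "card {i\<in>T. i = a} = (if a \<in> T then 1 else 0)"
proof -
  have "{i\<in>T. i = a} = (if a \<in> T then {a} else {})" by auto
  then show ?thesis by simp
qed

locale P2 =
  fixes n k d :: nat and r :: "nat \<Rightarrow> pv"
  assumes sc: "stab_code n k d r" and nd: "nondegenerate n k d r"
begin

definition s :: nat where "s = d - 1"
definition BB :: "nat set" where "BB = {n-s..<n}"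
definition SS :: "pv set" where "SS = rowspan (n-k) r"
definition restr :: "pv \<Rightarrow> pv" where "restr p = (\<lambda>j. fst p j \<and> j \<in> BB, \<lambda>j. snd p j \<and> j \<in> BB)"

lemma dpos: "1 \<le> d" using stab_code_d_pos[OF sc] .
lemma dn: "d \<le> n"
proof -
  obtain p where "weight n p = d" using sc unfolding stab_code_def by blast
  then show ?thesis using weight_le[of n p] by simp
qed
lemma sd: "s < d" unfolding s_def using dpos by simp
lemma sn: "s \<le> n" using sd dn by simp
lemma ind: "indep (n-k) r" using sc unfolding stab_code_def by simp
lemma rp: "i < n-k \<Longrightarrow> r i \<in> pauli n" using sc unfolding stab_code_def by simp

lemma SS_padd: "a \<in> SS \<Longrightarrow> b \<in> SS \<Longrightarrow> padd a b \<in> SS" unfolding SS_def by (rule rowspan_padd)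
lemma SS_zero: "pzero \<in> SS" unfolding SS_def by (rule pzero_in_rowspan)
lemma SS_gen: "i < n-k \<Longrightarrow> r i \<in> SS" unfolding SS_def by (rule gen_in_rowspan)

lemma BB_n: "j \<in> BB \<Longrightarrow> j < n" unfolding BB_def by simp

lemma surj: assumes v: "inB BB v" shows "\<exists>w\<in>SS. restr w = v"
proof -
  have "v \<in> restr ` SS"
  proof (rule span_full_pv[of BB])
    show "finite BB" unfolding BB_def by simp
    show "\<forall>w\<in>restr ` SS. inB BB w" unfolding restr_def inB_def by auto
    have "restr pzero = pzero" unfolding restr_def pzero_def by simp
    then show "pzero \<in> restr ` SS" using SS_zero by (metis image_eqI)
    have rp: "\<And>a b. padd (restr a) (restr b) = restr (padd a b)" unfolding restr_def padd_def by auto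
    show "\<forall>a\<in>restr ` SS. \<forall>b\<in>restr ` SS. padd a b \<in> restr ` SS"
      using rp SS_padd by auto
    show "inB BB v" using v .
    show "\<forall>u. inB BB u \<longrightarrow> u \<noteq> pzero \<longrightarrow> (\<exists>w\<in>restr ` SS. sympl BB u w)"
    proof (intro allI impI)
      fix u assume u: "inB BB u" "u \<noteq> pzero"
      show "\<exists>w\<in>restr ` SS. sympl BB u w"
      proof (rule ccontr)
        assume no: "\<not> (\<exists>w\<in>restr ` SS. sympl BB u w)"
        have up: "u \<in> pauli n" unfolding pauli_def
        proof (intro CollectI allI impI)
          fix j assume "n \<le> j" then have "j \<notin> BB" using BB_n by fastforce
          then show "\<not> fst u j \<and> \<not> snd u j" using u(1) unfolding inB_def by blast
        qed
        have spl: "{..<n} = {..<n-s} \<union> BB" unfolding BB_def using sn by auto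
        have "commute n u (r i)" if i: "i < n-k" for i
        proof -
          have "\<not> sympl {..<n-s} u (r i)" using u(1) unfolding inB_def BB_def by (intro sympl_zero) auto
          moreover have "sympl BB u (r i) = sympl BB u (restr (r i))"
            unfolding restr_def by (rule sympl_cong) auto
          moreover have "\<not> sympl BB u (restr (r i))" using no SS_gen[OF i] by blast
          moreover have "sympl {..<n} u (r i) = (sympl {..<n-s} u (r i) \<noteq> sympl BB u (r i))"
            unfolding spl by (rule sympl_Un) (auto simp: BB_def)
          ultimately show ?thesis unfolding commute_sympl by simp
        qed
        then have "u \<in> normalizer n SS" unfolding SS_def normalizer_gen using up by simp
        then have "d \<le> weight n u" using nd u(2) unfolding nondegenerate_def SS_def by blast
        moreover have "weight n u \<le> s"
        proof -
          have "{j. j < n \<and> (fst u j \<or> snd u j)} \<subseteq> BB" using u(1) unfolding inB_def by auto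
          then have "weight n u \<le> card BB" unfolding weight_def by (intro card_mono) (auto simp: BB_def)
          also have "card BB = s" unfolding BB_def using sn by simp
          finally show ?thesis .
        qed
        ultimately show False using sd by simp
      qed
    qed
  qed
  then show ?thesis by auto
qed

definition Xv :: "nat \<Rightarrow> pv" where "Xv b = (\<lambda>j. j = n-s+b, \<lambda>j. False)"
definition Zv :: "nat \<Rightarrow> pv" where "Zv b = (\<lambda>j. False, \<lambda>j. j = n-s+b)"
definition xx :: "nat \<Rightarrow> pv" where "xx b = (SOME w. w \<in> SS \<and> restr w = Xv b)"
definition zz :: "nat \<Rightarrow> pv" where "zz b = (SOME w. w \<in> SS \<and> restr w = Zv b)"

lemma xx_prop: "b < s \<Longrightarrow> xx b \<in> SS \<and> restr (xx b) = Xv b"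
proof -
  assume b: "b < s"
  have "inB BB (Xv b)" unfolding inB_def Xv_def BB_def using b sn by auto
  then have "\<exists>w. w \<in> SS \<and> restr w = Xv b" using surj by blast
  then show ?thesis unfolding xx_def by (rule someI_ex)
qed

lemma zz_prop: "b < s \<Longrightarrow> zz b \<in> SS \<and> restr (zz b) = Zv b"
proof -
  assume b: "b < s"
  have "inB BB (Zv b)" unfolding inB_def Zv_def BB_def using b sn by auto
  then have "\<exists>w. w \<in> SS \<and> restr w = Zv b" using surj by blast
  then show ?thesis unfolding zz_def by (rule someI_ex)
qed

definition fb :: "nat \<Rightarrow> pv" where "fb i = (if i < s then xx i else zz (i - s))"

lemma fb_in: "i < 2*s \<Longrightarrow> fb i \<in> SS"
  unfolding fb_def using xx_prop zz_prop by auto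

lemma restr_at: "j \<in> BB \<Longrightarrow> fst p j = fst (restr p) j \<and> snd p j = snd (restr p) j"
  unfolding restr_def by simp

lemma nsb_BB: "b < s \<Longrightarrow> n-s+b \<in> BB" unfolding BB_def using sn by auto

lemma fb_B:
  assumes i: "i < 2*s" and b: "b < s"
  shows "fst (fb i) (n-s+b) = (i = b)" "snd (fb i) (n-s+b) = (i = s+b)"
proof -
  have j: "n-s+b \<in> BB" using nsb_BB[OF b] .
  have "fst (fb i) (n-s+b) = (i = b) \<and> snd (fb i) (n-s+b) = (i = s+b)"
  proof (cases "i < s")
    case True
    then have "restr (fb i) = Xv i" using xx_prop unfolding fb_def by simp
    then show ?thesis using restr_at[OF j, of "fb i"] True b unfolding Xv_def by auto
  next
    case False
    then have "restr (fb i) = Zv (i-s)" using zz_prop i unfolding fb_def by simp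
    then show ?thesis using restr_at[OF j, of "fb i"] False b unfolding Zv_def by auto
  qed
  then show "fst (fb i) (n-s+b) = (i = b)" "snd (fb i) (n-s+b) = (i = s+b)" by simp_all
qed

lemma psum_fb:
  assumes T: "T \<subseteq> {..<2*s}" and b: "b < s"
  shows "fst (psum fb T) (n-s+b) = (b \<in> T)" "snd (psum fb T) (n-s+b) = (s+b \<in> T)"
proof -
  have e1: "{i\<in>T. fst (fb i) (n-s+b)} = {i\<in>T. i = b}" using fb_B T b by auto
  show "fst (psum fb T) (n-s+b) = (b \<in> T)" unfolding psum_def by (simp only: fst_conv e1 card_eq_single2) simp
  have e2: "{i\<in>T. snd (fb i) (n-s+b)} = {i\<in>T. i = s+b}" using fb_B T b by auto
  show "snd (psum fb T) (n-s+b) = (s+b \<in> T)" unfolding psum_def by (simp only: snd_conv e2 card_eq_single2) simp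
qed

lemma indep_fb: "indep (2*s) fb"
  unfolding indep_def
proof (intro allI impI notI)
  fix T assume T: "T \<subseteq> {..<2*s}" "T \<noteq> {}" and z: "psum fb T = pzero"
  obtain t where t: "t \<in> T" using T(2) by blast
  have ts: "t < 2*s" using t T(1) by auto
  show False
  proof (cases "t < s")
    case True
    then have "fst (psum fb T) (n-s+t)" using psum_fb[OF T(1) True] t by simp
    then show False using z unfolding pzero_def by simp
  next
    case False
    then have b: "t - s < s" using ts by simp
    have "s + (t - s) = t" using False by simp
    then have "snd (psum fb T) (n-s+(t-s))" using psum_fb[OF T(1) b] t by simp
    then show False using z unfolding pzero_def by simp
  qed
qed

definition Tv :: "pv \<Rightarrow> nat set" where
  "Tv v = {i. i < 2*s \<and> (if i < s then fst v (n-s+i) else snd v (n-s+(i-s)))}"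
definition red :: "pv \<Rightarrow> pv" where "red v = padd v (psum fb (Tv v))"

lemma Tv_sub: "Tv v \<subseteq> {..<2*s}" unfolding Tv_def by auto

lemma red_B: assumes j: "j \<in> BB" shows "\<not> fst (red v) j \<and> \<not> snd (red v) j"
proof -
  define b where "b = j - (n-s)"
  have b: "b < s" "j = n-s+b" using j sn unfolding b_def BB_def by auto
  have "fst (psum fb (Tv v)) j = fst v j" using psum_fb(1)[OF Tv_sub b(1)] b unfolding Tv_def by simp
  moreover have "snd (psum fb (Tv v)) j = snd v j" using psum_fb(2)[OF Tv_sub b(1)] b unfolding Tv_def by simp
  ultimately show ?thesis unfolding red_def padd_def by simp
qed

lemma psum_fb_in: "T \<subseteq> {..<2*s} \<Longrightarrow> psum fb T \<in> SS"
proof -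
  assume T: "T \<subseteq> {..<2*s}"
  then have "finite T" using finite_subset by auto
  then show ?thesis using psum_in_closed[of T fb SS] T fb_in SS_zero SS_padd by auto
qed

lemma red_in: "v \<in> SS \<Longrightarrow> red v \<in> SS"
  unfolding red_def using psum_fb_in[OF Tv_sub] SS_padd by simp

lemma red_back: "padd (red v) (psum fb (Tv v)) = v"
  unfolding red_def by (simp add: padd_cancel)

end

context P2 begin

definition L0 :: "pv list" where "L0 = map fb [0..<2*s]"
definition Lf :: "pv list" where "Lf = grd (\<lambda>j. red (r j)) L0 (n-k)"

lemma L0_len: "length L0 = 2*s" unfolding L0_def by simp
lemma L0_nth: "i < 2*s \<Longrightarrow> L0 ! i = fb i" unfolding L0_def by simp

lemma L0_ind: "indep (length L0) ((!) L0)"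
  unfolding L0_len using indep_cong[of "2*s" "(!) L0" fb] L0_nth indep_fb by simp

lemma sp_L0: "sp L0 = rowspan (2*s) fb"
  unfolding L0_len by (rule rowspan_cong) (simp add: L0_nth)

lemma Lf_props:
  "\<exists>M. Lf = L0 @ M \<and> set M \<subseteq> (\<lambda>j. red (r j)) ` {..<n-k}"
  "indep (length Lf) ((!) Lf)"
  "\<forall>j<n-k. red (r j) \<in> sp Lf"
  using grd_props[OF L0_ind, of "\<lambda>j. red (r j)" "n-k"] unfolding Lf_def by blast+

lemma Lf_in: "i < length Lf \<Longrightarrow> Lf ! i \<in> SS"
proof -
  assume i: "i < length Lf"
  obtain M where M: "Lf = L0 @ M" "set M \<subseteq> (\<lambda>j. red (r j)) ` {..<n-k}" using Lf_props(1) by blast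
  show ?thesis
  proof (cases "i < 2*s")
    case True
    then show ?thesis using M(1) L0_len L0_nth fb_in by (simp add: nth_append)
  next
    case False
    then have "Lf ! i = M ! (i - 2*s)" using M(1) L0_len by (simp add: nth_append)
    moreover have "i - 2*s < length M" using i M(1) L0_len False by simp
    ultimately have "Lf ! i \<in> set M" by simp
    then obtain j where "j < n-k" "Lf ! i = red (r j)" using M(2) by auto
    then show ?thesis using red_in SS_gen by simp
  qed
qed

lemma sp_Lf: "sp Lf = SS"
proof
  show "sp Lf \<subseteq> SS" by (rule rowspan_sub) (use Lf_in SS_zero SS_padd in auto)
  show "SS \<subseteq> sp Lf" unfolding SS_def
  proof (rule rowspan_sub)
    show "\<forall>i<n-k. r i \<in> sp Lf"
    proof (intro allI impI)
      fix i assume i: "i < n-k"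
      have "psum fb (Tv (r i)) \<in> sp L0" unfolding sp_L0 using psum_in[OF Tv_sub] .
      moreover obtain M where "Lf = L0 @ M" using Lf_props(1) by blast
      ultimately have "psum fb (Tv (r i)) \<in> sp Lf" using sp_mono by auto
      moreover have "red (r i) \<in> sp Lf" using Lf_props(3) i by simp
      ultimately have "padd (red (r i)) (psum fb (Tv (r i))) \<in> sp Lf" by (metis rowspan_padd)
      then show "r i \<in> sp Lf" using red_back by simp
    qed
    show "pzero \<in> sp Lf" by (rule pzero_in_rowspan)
    show "\<forall>p\<in>sp Lf. \<forall>q\<in>sp Lf. padd p q \<in> sp Lf" using rowspan_padd by blast
  qed
qed

lemma Lf_len: "length Lf = n-k"
proof -
  have "card (sp Lf) = 2 ^ length Lf" using card_rowspan[OF Lf_props(2)] .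
  moreover have "card SS = 2 ^ (n-k)" unfolding SS_def using card_rowspan[OF ind] .
  ultimately have "(2::nat) ^ length Lf = 2 ^ (n-k)" using sp_Lf by simp
  then show ?thesis by simp
qed

lemma Lf_std: "std_form n (n-k) s ((!) Lf)"
proof -
  obtain M where M: "Lf = L0 @ M" "set M \<subseteq> (\<lambda>j. red (r j)) ` {..<n-k}" using Lf_props(1) by blast
  have s2: "2*s \<le> n-k" using M(1) L0_len Lf_len by (metis le_add1 length_append)
  have rows: "(fst (Lf ! i) j \<longleftrightarrow> i < s \<and> j - (n - s) = i) \<and> (snd (Lf ! i) j \<longleftrightarrow> s \<le> i \<and> i < 2*s \<and> j - (n - s) = i - s)"
    if i: "i < n-k" and j: "n - s \<le> j" "j < n" for i j
  proof -
    define b where "b = j - (n-s)"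
    have b: "b < s" "j = n-s+b" using j sn unfolding b_def by auto
    show ?thesis
    proof (cases "i < 2*s")
      case True
      then have li: "Lf ! i = fb i" using M(1) L0_len L0_nth by (simp add: nth_append)
      have jj: "j - (n-s) = b" using b_def by simp
      have f1: "fst (fb i) j = (i = b)" "snd (fb i) j = (i = s+b)" using fb_B[OF True b(1)] b(2) by simp_all
      show ?thesis unfolding li jj f1 using True b(1) by auto
    next
      case False
      then have "Lf ! i = M ! (i - 2*s)" using M(1) L0_len by (simp add: nth_append)
      moreover have "i - 2*s < length M" using i M(1) L0_len Lf_len False by simp
      ultimately have "Lf ! i \<in> set M" by simp
      then obtain t where "Lf ! i = red (r t)" using M(2) by auto
      moreover have "j \<in> BB" using j unfolding BB_def by simp
      ultimately show ?thesis using red_B False by simp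
    qed
  qed
  show ?thesis unfolding std_form_def using s2 sn rows by blast
qed

lemma main2: "\<exists>\<sigma> s r'. bij_betw \<sigma> {..<n} {..<n} \<and>
                (\<forall>j. n \<le> j \<longrightarrow> \<sigma> j = j) \<and>
                std_form n (n - k) s r' \<and>
                rowspan (n - k) r' = qperm \<sigma> ` rowspan (n - k) r \<and>
                d - 1 \<le> s \<and> s \<le> (n - k) div 2"
proof (intro exI conjI)
  show "bij_betw id {..<n} {..<n}" by simp
  show "\<forall>j. n \<le> j \<longrightarrow> id j = j" by simp
  show "std_form n (n-k) s ((!) Lf)" by (rule Lf_std)
  have q: "qperm id ` rowspan (n-k) r = rowspan (n-k) r"
  proof -
    have "\<And>p. qperm id p = p" unfolding qperm_def by simp
    then show ?thesis by simp
  qed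
  show "rowspan (n-k) ((!) Lf) = qperm id ` rowspan (n-k) r"
    unfolding q using sp_Lf Lf_len unfolding SS_def by simp
  show "d - 1 \<le> s" unfolding s_def by simp
  have "2*s \<le> n-k" using Lf_std unfolding std_form_def by simp
  then show "s \<le> (n-k) div 2" by simp
qed

end

theorem theorem1:
  fixes n k d :: nat and r :: "nat \<Rightarrow> pv"
  assumes "stab_code n k d r"
  shows "(\<forall>s c. std_form n (n - k) s r \<and> c \<le> s \<longrightarrow>
            eaqec_AB (n - c) k d c (\<lambda>i. trunc (n - c) (r i)))
       \<and> (nondegenerate n k d r \<longrightarrow>
            (\<exists>\<sigma> s r'. bij_betw \<sigma> {..<n} {..<n} \<and>
                (\<forall>j. n \<le> j \<longrightarrow> \<sigma> j = j) \<and>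
                std_form n (n - k) s r' \<and>
                rowspan (n - k) r' = qperm \<sigma> ` rowspan (n - k) r \<and>
                d - 1 \<le> s \<and> s \<le> (n - k) div 2))"
proof (intro conjI allI impI)
  fix s c assume h: "std_form n (n - k) s r \<and> c \<le> s"
  interpret P1 n k d r s c using assms h by unfold_locales simp_all
  show "eaqec_AB (n - c) k d c (\<lambda>i. trunc (n - c) (r i))" by (rule main1)
next
  assume nd: "nondegenerate n k d r"
  interpret P2 n k d r using assms nd by unfold_locales
  show "\<exists>\<sigma> s r'. bij_betw \<sigma> {..<n} {..<n} \<and>
                (\<forall>j. n \<le> j \<longrightarrow> \<sigma> j = j) \<and>
                std_form n (n - k) s r' \<and>
                rowspan (n - k) r' = qperm \<sigma> ` rowspan (n - k) r \<and>
                d - 1 \<le> s \<and> s \<le> (n - k) div 2" by (rule main2)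
qed


end
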